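(* Let $d_d\le d_f$ be positive integers, let $f:\mathbb{F}_q^k\to\mathrm{Im}(f)$ be a $(d_f-1)$-locally binary function, and suppose there exists a systematic $[n,k,d_d]$ linear code over $\mathbb{F}_q$ (generator matrix $[I_k\mid P]$). Then $r_f(k:d_d,d_f)\le n-k+d_f-d_d$.
   Context: $d(\cdot,\cdot)$ is Hamming distance. The function ball of $f$ of radius $\rho$ around $u$ is $B_f(u,\rho)=\{f(u'):u'\in\mathbb{F}_q^k,\ d(u,u')\le\rho\}$; $f$ is $\rho$-locally binary if $|B_f(u,\rho)|\le 2$ for all $u\in\mathbb{F}_q^k$. For integers $0\le d_d\le d_f$, an $(f\!:d_d,d_f)$-FCC with redundancy $r$ is a systematic encoding $\mathfrak{C}_f(u)=(u,p_u)\in\mathbb{F}_q^{k+r}$ with $d(\mathfrak{C}_f(u_1),\mathfrak{C}_f(u_2))\ge d_d$ whenever $u_1\ne u_2$ and $\ge d_f$ whenever $f(u_1)\ne f(u_2)$; $r_f(k:d_d,d_f)$ is the minimum such $r$. *)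

theory Defs
  imports Main
begin

definition hamming :: "'a list \<Rightarrow> 'a list \<Rightarrow> nat" where
  "hamming x y = card {i. i < length x \<and> i < length y \<and> x ! i \<noteq> y ! i}"

definition vecs :: "nat \<Rightarrow> 'a list set" where
  "vecs m = {u. length u = m}"

definition fun_ball :: "nat \<Rightarrow> ('a list \<Rightarrow> 'b) \<Rightarrow> 'a list \<Rightarrow> nat \<Rightarrow> 'b set" where
  "fun_ball k f u \<rho> = {f u' | u'. u' \<in> vecs k \<and> hamming u u' \<le> \<rho>}"

definition locally_binary :: "nat \<Rightarrow> ('a list \<Rightarrow> 'b) \<Rightarrow> nat \<Rightarrow> bool" where
  "locally_binary k f \<rho> \<longleftrightarrow> (\<forall>u \<in> vecs k. card (fun_ball k f u \<rho>) \<le> 2)"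

definition is_FCC :: "nat \<Rightarrow> ('a list \<Rightarrow> 'b) \<Rightarrow> nat \<Rightarrow> nat \<Rightarrow> nat \<Rightarrow> ('a list \<Rightarrow> 'a list) \<Rightarrow> bool" where
  "is_FCC k f dd df r p \<longleftrightarrow>
     (\<forall>u \<in> vecs k. length (p u) = r) \<and>
     (\<forall>u1 \<in> vecs k. \<forall>u2 \<in> vecs k. u1 \<noteq> u2 \<longrightarrow> hamming (u1 @ p u1) (u2 @ p u2) \<ge> dd) \<and>
     (\<forall>u1 \<in> vecs k. \<forall>u2 \<in> vecs k. f u1 \<noteq> f u2 \<longrightarrow> hamming (u1 @ p u1) (u2 @ p u2) \<ge> df)"

definition r_f :: "nat \<Rightarrow> ('a list \<Rightarrow> 'b) \<Rightarrow> nat \<Rightarrow> nat \<Rightarrow> nat" where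
  "r_f k f dd df = (LEAST r. \<exists>p :: 'a list \<Rightarrow> 'a list. is_FCC k f dd df r p)"

text \<open>Systematic linear encoding with generator matrix [I_k | P], P a k x (n-k) matrix.\<close>
definition sys_enc :: "nat \<Rightarrow> nat \<Rightarrow> (nat \<Rightarrow> nat \<Rightarrow> 'a::comm_semiring_0) \<Rightarrow> 'a list \<Rightarrow> 'a list" where
  "sys_enc k n P u = u @ map (\<lambda>j. \<Sum>i<k. u ! i * P i j) [0..<n - k]"

definition sys_code_min_dist :: "nat \<Rightarrow> nat \<Rightarrow> (nat \<Rightarrow> nat \<Rightarrow> 'a::comm_semiring_0) \<Rightarrow> nat \<Rightarrow> bool" where
  "sys_code_min_dist k n P d \<longleftrightarrow>
     (\<forall>u1 \<in> vecs k. \<forall>u2 \<in> vecs k. u1 \<noteq> u2 \<longrightarrow> hamming (sys_enc k n P u1) (sys_enc k n P u2) \<ge> d) \<and>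
     (\<exists>u1 \<in> vecs k. \<exists>u2 \<in> vecs k. u1 \<noteq> u2 \<and> hamming (sys_enc k n P u1) (sys_enc k n P u2) = d)"

end

theory Submission
  imports Defs
begin

lemma hamming_append:
  assumes "length a = length c" "length b = length d"
  shows "hamming (a @ b) (c @ d) = hamming a c + hamming b d"
proof -
  let ?A = "{i. i < length a \<and> a ! i \<noteq> c ! i}"
  let ?B = "{i. i < length b \<and> b ! i \<noteq> d ! i}"
  have eq: "{i. i < length (a@b) \<and> i < length (c@d) \<and> (a@b) ! i \<noteq> (c@d) ! i}
      = ?A \<union> (\<lambda>i. i + length a) ` ?B"
  proof (rule set_eqI, rule iffI)
    fix i assume h: "i \<in> {i. i < length (a@b) \<and> i < length (c@d) \<and> (a@b) ! i \<noteq> (c@d) ! i}"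
    show "i \<in> ?A \<union> (\<lambda>i. i + length a) ` ?B"
    proof (cases "i < length a")
      case True then show ?thesis using h assms by (auto simp: nth_append)
    next
      case False
      then have "i - length a \<in> ?B" using h assms by (auto simp: nth_append)
      then show ?thesis using False by (auto intro!: image_eqI[where x="i - length a"])
    qed
  next
    fix i assume "i \<in> ?A \<union> (\<lambda>i. i + length a) ` ?B"
    then show "i \<in> {i. i < length (a@b) \<and> i < length (c@d) \<and> (a@b) ! i \<noteq> (c@d) ! i}"
      using assms by (auto simp: nth_append)
  qed
  have "card (?A \<union> (\<lambda>i. i + length a) ` ?B) = card ?A + card ((\<lambda>i. i + length a) ` ?B)"
    by (rule card_Un_disjoint) auto
  also have "card ((\<lambda>i. i + length a) ` ?B) = card ?B" by (rule card_image) (auto simp: inj_on_def)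
  finally show ?thesis unfolding hamming_def eq using assms by simp
qed

lemma hamming_self[simp]: "hamming u u = 0"
  by (simp add: hamming_def)

lemma hamming_sym: "hamming u v = hamming v u"
  unfolding hamming_def by (metis (mono_tags, lifting))

lemma hamming_replicate: "x \<noteq> y \<Longrightarrow> hamming (replicate m x) (replicate m y) = m"
proof -
  assume "x \<noteq> y"
  then have "{i. i < length (replicate m x) \<and> i < length (replicate m y) \<and> replicate m x ! i \<noteq> replicate m y ! i} = {..<m}"
    by auto
  then show ?thesis unfolding hamming_def by simp
qed

lemma hamming_rep_same: "hamming (replicate m x) (replicate m x) = 0"
  by simp

lemma finite_vecs: "finite (vecs k :: ('a::finite) list set)"
  unfolding vecs_def using finite_lists_length_eq[of "UNIV :: 'a set" k] by simp

lemma three_distinct: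
  fixes f :: "('a::finite) list \<Rightarrow> 'b"
  assumes lb: "locally_binary k f \<rho>" and w: "w \<in> vecs k"
    and x: "x \<in> vecs k" "hamming w x \<le> \<rho>"
    and y: "y \<in> vecs k" "hamming w y \<le> \<rho>"
    and d: "f x \<noteq> f w" "f y \<noteq> f w"
  shows "f x = f y"
proof (rule ccontr)
  assume ne: "f x \<noteq> f y"
  have sub: "{f w, f x, f y} \<subseteq> fun_ball k f w \<rho>"
    unfolding fun_ball_def using w x y by auto
  have fin: "finite (fun_ball k f w \<rho>)"
  proof -
    have "fun_ball k f w \<rho> \<subseteq> f ` vecs k" unfolding fun_ball_def by auto
    then show ?thesis using finite_vecs finite_subset by blast
  qed
  have "card {f w, f x, f y} = 3" using ne d by auto
  moreover have "card {f w, f x, f y} \<le> card (fun_ball k f w \<rho>)"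
    using card_mono[OF fin sub] .
  moreover have "card (fun_ball k f w \<rho>) \<le> 2" using lb w unfolding locally_binary_def by auto
  ultimately show False by simp
qed

theorem lemma7:
  fixes f :: "('a::{finite,field}) list \<Rightarrow> 'b"
    and P :: "nat \<Rightarrow> nat \<Rightarrow> 'a"
    and k n dd df :: nat
  assumes "0 < dd" and "dd \<le> df"
    and "locally_binary k f (df - 1)"
    and "k \<le> n"
    and "sys_code_min_dist k n P dd"
  shows "r_f k f dd df \<le> n - k + df - dd"
proof -
  note lb = assms(3)
  define R where "R = (\<lambda>u v. u \<in> vecs k \<and> v \<in> vecs k \<and> hamming u v \<le> df - 1 \<and> f u \<noteq> f v)"
  have Rsym: "R u v \<Longrightarrow> R v u" for u v unfolding R_def by (auto simp: hamming_sym)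
  define rep where "rep u = (SOME w. R\<^sup>*\<^sup>* w u)" for u
  have rep_rel: "R\<^sup>*\<^sup>* (rep u) u" for u unfolding rep_def by (rule someI[where x=u]) simp
  have rtr_sym: "R\<^sup>*\<^sup>* u v \<Longrightarrow> R\<^sup>*\<^sup>* v u" for u v
  proof (induction rule: rtranclp_induct)
    case base then show ?case by simp
  next
    case (step y z) then show ?case using Rsym by (meson converse_rtranclp_into_rtranclp)
  qed
  have rep_eq: "rep u1 = rep u2" if "R u1 u2" for u1 u2
  proof -
    have "(\<lambda>w. R\<^sup>*\<^sup>* w u1) = (\<lambda>w. R\<^sup>*\<^sup>* w u2)"
    proof
      fix w
      have a: "R\<^sup>*\<^sup>* u1 u2" using that by simp
      have b: "R\<^sup>*\<^sup>* u2 u1" using Rsym that by blast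
      show "R\<^sup>*\<^sup>* w u1 = R\<^sup>*\<^sup>* w u2" using a b by (meson rtranclp_trans)
    qed
    then show ?thesis unfolding rep_def by simp
  qed
  have Q: "R\<^sup>*\<^sup>* r w \<Longrightarrow> f w = f r \<or> (\<exists>x. R w x \<and> f x = f r)" for r w
  proof (induction rule: rtranclp_induct)
    case base then show ?case by simp
  next
    case (step y z)
    show ?case
    proof (cases "f y = f r")
      case True then show ?thesis using Rsym[OF step(2)] by blast
    next
      case False
      then obtain x where x: "R y x" "f x = f r" using step(3) by blast
      have "f x = f z"
        by (rule three_distinct[OF lb, of y x z]) (use x step(2) False in \<open>auto simp: R_def\<close>)
      then show ?thesis using x by simp
    qed
  qed
  have edge: "(f u1 = f (rep u1)) \<noteq> (f u2 = f (rep u2))" if e: "R u1 u2" for u1 u2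
  proof -
    have re: "rep u2 = rep u1" using rep_eq[OF e] by simp
    let ?r = "rep u1"
    have q1: "f u1 = f ?r \<or> (\<exists>x. R u1 x \<and> f x = f ?r)" using Q[OF rep_rel[of u1]] .
    have ne: "f u1 \<noteq> f u2" using e unfolding R_def by simp
    show ?thesis
    proof (cases "f u1 = f ?r")
      case True then show ?thesis using ne re by simp
    next
      case False
      then obtain x where x: "R u1 x" "f x = f ?r" using q1 by blast
      have "f x = f u2"
        by (rule three_distinct[OF lb, of u1 x u2]) (use x e False ne in \<open>auto simp: R_def\<close>)
      then show ?thesis using False re x by simp
    qed
  qed
  define c where "c u = (if f u = f (rep u) then (1::'a) else 0)" for u
  define par where "par u = map (\<lambda>j. \<Sum>i<k. u ! i * P i j) [0..<n - k]" for u
  define p where "p u = par u @ replicate (df - dd) (c u)" for u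
  have se: "sys_enc k n P u = u @ par u" for u unfolding sys_enc_def par_def by simp
  have lenpar: "length (par u) = n - k" for u unfolding par_def by simp
  have full: "hamming (u1 @ p u1) (u2 @ p u2) = hamming (sys_enc k n P u1) (sys_enc k n P u2)
      + hamming (replicate (df - dd) (c u1)) (replicate (df - dd) (c u2))"
    if "u1 \<in> vecs k" "u2 \<in> vecs k" for u1 u2
  proof -
    have "u1 @ p u1 = sys_enc k n P u1 @ replicate (df - dd) (c u1)" unfolding p_def se by simp
    moreover have "u2 @ p u2 = sys_enc k n P u2 @ replicate (df - dd) (c u2)" unfolding p_def se by simp
    ultimately show ?thesis
      using that by (simp add: hamming_append se lenpar vecs_def)
  qed
  have pref: "hamming u1 u2 \<le> hamming (sys_enc k n P u1) (sys_enc k n P u2)"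
    if "u1 \<in> vecs k" "u2 \<in> vecs k" for u1 u2
    using that by (simp add: se hamming_append lenpar vecs_def)
  have mind: "hamming (sys_enc k n P u1) (sys_enc k n P u2) \<ge> dd"
    if "u1 \<in> vecs k" "u2 \<in> vecs k" "u1 \<noteq> u2" for u1 u2
    using assms(5) that unfolding sys_code_min_dist_def by blast
  have fcc: "is_FCC k f dd df (n - k + df - dd) p"
    unfolding is_FCC_def
  proof (intro conjI ballI impI)
    fix u :: "'a list" assume "u \<in> vecs k"
    show "length (p u) = n - k + df - dd" using assms(2) by (simp add: p_def lenpar)
  next
    fix u1 u2 :: "'a list" assume h: "u1 \<in> vecs k" "u2 \<in> vecs k" "u1 \<noteq> u2"
    show "dd \<le> hamming (u1 @ p u1) (u2 @ p u2)" using full[OF h(1,2)] mind[OF h] by simp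
  next
    fix u1 u2 :: "'a list" assume h: "u1 \<in> vecs k" "u2 \<in> vecs k" and fne: "f u1 \<noteq> f u2"
    show "df \<le> hamming (u1 @ p u1) (u2 @ p u2)"
    proof (cases "hamming u1 u2 \<le> df - 1")
      case False
      then show ?thesis using full[OF h] pref[OF h] by simp
    next
      case True
      then have "R u1 u2" using h fne unfolding R_def by simp
      then have "c u1 \<noteq> c u2" using edge unfolding c_def by auto
      then have "hamming (replicate (df - dd) (c u1)) (replicate (df - dd) (c u2)) = df - dd"
        by (rule hamming_replicate)
      moreover have "u1 \<noteq> u2" using fne by auto
      ultimately show ?thesis using full[OF h] mind[OF h] assms(2) by simp
    qed
  qed
  show ?thesis unfolding r_f_def by (rule Least_le) (use fcc in blast)
qed

end
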